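(* Let $n = 2k+1 > 3$ be an odd integer, $m_1 = k(2k+1)$ and $m_2 = 6k-3$. If an edge-coloring of a complete graph contains no rainbow $n$-cycle, no rainbow $m_1$-cycle and no rainbow $m_2$-cycle, then it contains no rainbow $M$-cycle for every integer $M \ge 8k^2 - 8k + 12 = 2n^2 - 13n + 23$.
   Context: A coloring is an arbitrary (not necessarily proper) assignment of colors, from an arbitrary set, to the edges of an undirected complete graph; the graph may be finite or infinite. A rainbow $n$-cycle is a cycle through $n$ distinct vertices whose $n$ edges all receive pairwise distinct colors. *)

theory Defs
  imports Main
begin

text \<open>An edge-coloring of the complete graph on the vertex type 'v is modelled as a
  symmetric function c :: 'v => 'v => 'c; the values c x x (loops) are irrelevant.\<close>

definition sym_coloring :: "('v \<Rightarrow> 'v \<Rightarrow> 'c) \<Rightarrow> bool" where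
  "sym_coloring c \<longleftrightarrow> (\<forall>x y. c x y = c y x)"

definition rainbow_cycle :: "('v \<Rightarrow> 'v \<Rightarrow> 'c) \<Rightarrow> nat \<Rightarrow> 'v list \<Rightarrow> bool" where
  "rainbow_cycle c n vs \<longleftrightarrow>
     n \<ge> 3 \<and> length vs = n \<and> distinct vs \<and>
     inj_on (\<lambda>i. c (vs ! i) (vs ! ((i + 1) mod n))) {..<n}"

definition has_rainbow_cycle :: "('v \<Rightarrow> 'v \<Rightarrow> 'c) \<Rightarrow> nat \<Rightarrow> bool" where
  "has_rainbow_cycle c n \<longleftrightarrow> (\<exists>vs. rainbow_cycle c n vs)"

end

theory Submission
  imports Defs
begin

lemma split_cycle:
  assumes sym: "sym_coloring c" and a3: "a \<ge> 3" and b3: "b \<ge> 3"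
    and rc: "rainbow_cycle c (a+b-2) vs"
  shows "rainbow_cycle c a (take a vs) \<or> rainbow_cycle c b (vs!0 # drop (a-1) vs)"
proof -
  define M where "M = a+b-2"
  define f where "f = (\<lambda>i. c (vs!i) (vs!((i+1) mod M)))"
  have len: "length vs = M" and dist: "distinct vs" and inj: "inj_on f {..<M}"
    using rc unfolding rainbow_cycle_def M_def f_def by auto
  have aM: "a < M" using b3 unfolding M_def by auto
  define \<chi> where "\<chi> = c (vs!0) (vs!(a-1))"
  have f_low: "f i = c (vs!i) (vs!(i+1))" if "i+1 < M" for i
    using that unfolding f_def by simp
  have f_last: "f (M-1) = c (vs!(M-1)) (vs!0)"
    using aM unfolding f_def by simp
  show ?thesis
  proof (cases "\<chi> \<in> f ` {..<a-1}")
    case False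
    define g where "g = (\<lambda>i. c (take a vs ! i) (take a vs ! ((i+1) mod a)))"
    have g_eq: "g i = f i" if "i < a-1" for i
      using that aM f_low[of i] unfolding g_def by auto
    have g_last: "g (a-1) = \<chi>"
      using a3 aM sym unfolding g_def \<chi>_def sym_coloring_def by auto
    have inj1: "inj_on g {..<a-1}"
    proof -
      have "inj_on f {..<a-1}" by (rule inj_on_subset[OF inj]) (use aM in auto)
      then show ?thesis using inj_on_cong[of "{..<a-1}" g f] g_eq by auto
    qed
    have "g ` {..<a-1} = f ` {..<a-1}" using g_eq by auto
    then have nin: "g (a-1) \<notin> g ` {..<a-1}" using False g_last by simp
    have U: "{..<a} = insert (a-1) {..<a-1}" using a3 by auto
    have "inj_on g {..<a}" unfolding U using inj1 nin by auto
    then have "rainbow_cycle c a (take a vs)"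
      unfolding rainbow_cycle_def g_def using a3 aM len dist by auto
    then show ?thesis by simp
  next
    case True
    then obtain i0 where i0: "i0 < a-1" "\<chi> = f i0" by auto
    have nin0: "\<chi> \<notin> f ` {a-1..<M}"
    proof
      assume "\<chi> \<in> f ` {a-1..<M}"
      then obtain j where "j \<in> {a-1..<M}" "f j = f i0" using i0 by auto
      then show False using inj i0 aM unfolding inj_on_def by fastforce
    qed
    define ws where "ws = vs!0 # drop (a-1) vs"
    have lws: "length ws = b" using len aM a3 unfolding ws_def M_def by auto
    have ws0: "ws!0 = vs!0" unfolding ws_def by simp
    have wsS: "ws!(Suc j) = vs!(a-1+j)" if "j < b - 1" for j
      using that len aM unfolding ws_def M_def by auto
    define g where "g = (\<lambda>i. c (ws ! i) (ws ! ((i+1) mod b)))"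
    have g0: "g 0 = \<chi>" using b3 wsS[of 0] unfolding g_def \<chi>_def ws_def by simp
    have gS: "g (Suc j) = f (a-1+j)" if "j < b-1" for j
    proof (cases "j + 2 < b")
      case True
      then have "g (Suc j) = c (vs!(a-1+j)) (vs!(a-1+Suc j))"
        unfolding g_def using wsS[of j] wsS[of "Suc j"] that by simp
      also have "\<dots> = f (a-1+j)" using f_low[of "a-1+j"] True a3 unfolding M_def by simp
      finally show ?thesis .
    next
      case False
      then have jb: "j = b - 2" using that by simp
      then have "Suc j + 1 = b" using b3 by simp
      then have "(Suc j + 1) mod b = 0" by simp
      then have "g (Suc j) = c (vs!(a-1+j)) (vs!0)"
        unfolding g_def using wsS[of j] that ws0 by simp
      also have "a-1+j = M-1" using jb a3 b3 unfolding M_def by simp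
      finally show ?thesis using f_last \<open>a-1+j = M-1\<close> by simp
    qed
    have injS: "inj_on (\<lambda>j. g (Suc j)) {..<b-1}"
    proof (rule inj_onI)
      fix x y assume x: "x \<in> {..<b-1}" and y: "y \<in> {..<b-1}" and e: "g (Suc x) = g (Suc y)"
      then have "f (a-1+x) = f (a-1+y)" using gS by simp
      moreover have "a-1+x < M" "a-1+y < M" using x y a3 b3 unfolding M_def by auto
      ultimately have "a-1+x = a-1+y" using inj unfolding inj_on_def by blast
      then show "x = y" by simp
    qed
    have U: "{..<b} = insert 0 (Suc ` {..<b-1})"
    proof -
      have "b = Suc (b-1)" using b3 by simp
      then have "{..<b} = {..<Suc (b-1)}" by simp
      then show ?thesis using lessThan_Suc_eq_insert_0 by simp
    qed
    have injSS: "inj_on g (Suc ` {..<b-1})"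
      using injS by (simp add: inj_on_def)
    have "g 0 \<notin> g ` (Suc ` {..<b-1})"
    proof
      assume "g 0 \<in> g ` (Suc ` {..<b-1})"
      then obtain j where j: "j < b-1" "g 0 = g (Suc j)" by auto
      then have "\<chi> = f (a-1+j)" using g0 gS by simp
      moreover have "a-1+j \<in> {a-1..<M}" using j a3 unfolding M_def by auto
      ultimately show False using nin0 by auto
    qed
    then have "inj_on g {..<b}" unfolding U using injSS by auto
    moreover have "distinct ws"
    proof (cases vs)
      case Nil then show ?thesis using len aM by simp
    next
      case (Cons v rest)
      have e: "a - 1 = Suc (a - 2)" using a3 by simp
      have "drop (a-1) vs = drop (a-2) rest" unfolding Cons e by simp
      moreover have "set (drop (a-2) rest) \<subseteq> set rest" by (rule set_drop_subset)
      ultimately show ?thesis using dist Cons unfolding ws_def by (auto simp: distinct_drop)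
    qed
    ultimately have "rainbow_cycle c b ws" unfolding rainbow_cycle_def g_def using lws b3 by auto
    then show ?thesis unfolding ws_def by simp
  qed
qed

lemma arith_repr:
  fixes j N :: nat
  assumes "N \<ge> 8*j^2 + 24*j + 26"
  shows "\<exists>x y z. N = x*(2*j+3) + y*(6*j+7) + z*(2*j^2+9*j+8)"
proof -
  define a where "a = 2*j+3"
  define t where "t = (a - N mod a) mod a"
  define y where "y = t div 2"
  define z where "z = t mod 2"
  have a0: "a > 0" unfolding a_def by simp
  have ta: "t < a" unfolding t_def using a0 by simp
  have t2: "t = 2*y + z" unfolding y_def z_def by simp
  have z1: "z \<le> 1" unfolding z_def by simp
  have dvd: "a dvd N + t"
  proof (cases "N mod a = 0")
    case True
    then show ?thesis unfolding t_def by auto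
  next
    case False
    then have "a - N mod a < a" using a0 by simp
    then have "t = a - N mod a" unfolding t_def by (rule mod_less)
    moreover have "N = a * (N div a) + N mod a" by simp
    moreover have "N mod a < a" using a0 by simp
    ultimately have "N + t = a * (N div a) + a" by linarith
    then show ?thesis by simp
  qed
  define S where "S = y*(6*j+7) + z*(2*j^2+9*j+8)"
  have St: "S + t = a * (3*y + z*(j+3))"
  proof -
    have "S + t = y*(6*j+7) + z*(2*j^2+9*j+8) + 2*y + z" unfolding S_def t2 by simp
    also have "\<dots> = a * (3*y + z*(j+3))" unfolding a_def by (simp add: algebra_simps power2_eq_square)
    finally show ?thesis .
  qed
  have SN: "S \<le> N"
  proof (cases "z = 0")
    case True
    then have "y \<le> j+1" using ta t2 unfolding a_def by simp
    then have "y*(6*j+7) \<le> (j+1)*(6*j+7)" by (rule mult_le_mono1)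
    moreover have "(j+1)*(6*j+7) \<le> 8*j^2 + 24*j + 26" by (simp add: algebra_simps power2_eq_square)
    moreover have "S = y*(6*j+7)" using True unfolding S_def by simp
    ultimately show ?thesis using assms by linarith
  next
    case False
    then have z: "z = 1" using z1 by simp
    then have "y \<le> j" using ta t2 unfolding a_def by simp
    then have "y*(6*j+7) \<le> j*(6*j+7)" by (rule mult_le_mono1)
    moreover have "j*(6*j+7) + (2*j^2+9*j+8) \<le> 8*j^2 + 24*j + 26" by (simp add: algebra_simps power2_eq_square)
    moreover have "S = y*(6*j+7) + (2*j^2+9*j+8)" using z unfolding S_def by simp
    ultimately show ?thesis using assms by linarith
  qed
  have "a dvd N - S"
  proof -
    have "N - S = (N + t) - (S + t)" using SN by simp
    then show ?thesis using dvd St by (simp add: dvd_diff_nat)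
  qed
  then obtain x where x: "N - S = a * x" by blast
  have "N = x*(2*j+3) + y*(6*j+7) + z*(2*j^2+9*j+8)"
    using x SN unfolding S_def a_def by (simp add: algebra_simps)
  then show ?thesis by blast
qed


lemma absent_add:
  assumes sym: "sym_coloring c" and p3: "p \<ge> 3" and q3: "q \<ge> 3"
    and P: "\<not> has_rainbow_cycle c p" and Q: "\<not> has_rainbow_cycle c q"
  shows "\<not> has_rainbow_cycle c (p+q-2)"
  using split_cycle[OF sym p3 q3] P Q unfolding has_rainbow_cycle_def by blast

definition absent0 :: "('v \<Rightarrow> 'v \<Rightarrow> 'c) \<Rightarrow> nat \<Rightarrow> bool" where
  "absent0 c s \<longleftrightarrow> s = 0 \<or> \<not> has_rainbow_cycle c (s+2)"

lemma absent0_add: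
  assumes sym: "sym_coloring c" and "absent0 c s" and "absent0 c t"
  shows "absent0 c (s+t)"
proof (cases "s = 0 \<or> t = 0")
  case True then show ?thesis using assms by (auto simp: absent0_def)
next
  case False
  then have "\<not> has_rainbow_cycle c (s+2)" "\<not> has_rainbow_cycle c (t+2)"
    using assms by (auto simp: absent0_def)
  from absent_add[OF sym _ _ this] False have "\<not> has_rainbow_cycle c ((s+2)+(t+2)-2)" by simp
  then show ?thesis by (simp add: absent0_def)
qed

lemma absent0_mult:
  assumes sym: "sym_coloring c" and "absent0 c s"
  shows "absent0 c (x*s)"
proof (induction x)
  case 0 then show ?case by (simp add: absent0_def)
next
  case (Suc x)
  then show ?case using absent0_add[OF sym assms(2) Suc] by (simp add: add.commute)
qed

theorem lemma13:
  fixes c :: "'v \<Rightarrow> 'v \<Rightarrow> 'c" and k M :: nat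
  assumes "sym_coloring c"
    and "2 * k + 1 > 3"
    and "\<not> has_rainbow_cycle c (2 * k + 1)"
    and "\<not> has_rainbow_cycle c (k * (2 * k + 1))"
    and "\<not> has_rainbow_cycle c (6 * k - 3)"
    and "int M \<ge> 8 * int k ^ 2 - 8 * int k + 12"
  shows "\<not> has_rainbow_cycle c M"
proof -
  have k2: "k \<ge> 2" using assms(2) by simp
  define j where "j = k - 2"
  have kj: "k = j + 2" using k2 unfolding j_def by simp
  have A: "absent0 c (2*j+3)" using assms(3) unfolding absent0_def kj
    by (simp add: numeral_eq_Suc)
  have B: "absent0 c (6*j+7)" using assms(5) unfolding absent0_def kj
    by (simp add: numeral_eq_Suc)
  have e: "(j+2)*(2*(j+2)+1) = (2*j^2+9*j+8) + 2" by (simp add: algebra_simps power2_eq_square)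
  have C: "absent0 c (2*j^2+9*j+8)" using assms(4) unfolding absent0_def kj e by simp
  have Mb: "int M \<ge> 8 * int j ^ 2 + 24 * int j + 28" using assms(6) unfolding kj
    by (simp add: algebra_simps power2_eq_square)
  then have "int (8*j^2 + 24*j + 28) \<le> int M" by simp
  then have Mb': "M \<ge> 8*j^2 + 24*j + 28" by linarith
  define N where "N = M - 2"
  have MN: "M = N + 2" using Mb' unfolding N_def by simp
  have "N \<ge> 8*j^2 + 24*j + 26" using Mb' unfolding N_def by simp
  then obtain x y z where N: "N = x*(2*j+3) + y*(6*j+7) + z*(2*j^2+9*j+8)"
    using arith_repr by blast
  have "absent0 c N" unfolding N
    using absent0_add[OF assms(1) absent0_add[OF assms(1) absent0_mult[OF assms(1) A] absent0_mult[OF assms(1) B]]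
      absent0_mult[OF assms(1) C]] by simp
  moreover have "N \<noteq> 0" using Mb' unfolding N_def by simp
  ultimately show ?thesis unfolding MN absent0_def by simp
qed

end
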